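(* Let $0<s_1<s_2$, $m\ge 2$, $N=4m+1$, and let $\mathcal C\in\mathbb R^{N\times N}$ be the defect capacitance matrix. For a square matrix $M$ write $\chi_M(x)=\det(xI-M)$, and put $z=x-\alpha$. Then $$\chi_{\mathcal C}(x)=\chi_{A_{2m}^{(\beta_2,0)}(\alpha,\beta_1,\beta_2)}(x)\cdot\Big(\big[(z-\beta_1)P_m^*(x)+\big(\beta_2(\beta_1-\beta_2)z-\beta_2\beta_1^2-(\beta_1-\beta_2)\beta_2^2\big)P_{m-1}^*(x)\big]-\beta_2^2\big[(z-\beta_2)P_{m-1}^*(x)-\beta_2\beta_1^2P_{m-2}^*(x)\big]\Big).$$ Equivalently, $\chi_{\mathcal C}=\chi_{A_{2m+1}^{(\beta_2,\beta_1-\beta_2)}(\alpha,\beta_1,\beta_2)}\,\chi_{A_{2m}^{(0,\beta_2)}(\alpha,\beta_1,\beta_2)}-\beta_2^2\,\chi_{A_{2m}^{(\beta_2,0)}(\alpha,\beta_1,\beta_2)}\,\chi_{A_{2m-1}^{(0,\beta_2)}(\alpha,\beta_2,\beta_1)}$, where the matrices $A_{2m}^{(0,\beta_2)}(\alpha,\beta_1,\beta_2)$ and $A_{2m}^{(\beta_2,0)}(\alpha,\beta_1,\beta_2)$ have the same characteristic polynomial.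
   Context: Set $\alpha=\frac1{s_1}+\frac1{s_2}$, $\beta_1=-\frac1{s_1}$, $\beta_2=-\frac1{s_2}$, $\eta=\frac{2}{s_2}$. The defect capacitance matrix $\mathcal C=\mathcal C_N$ ($N=4m+1$) is the real symmetric tridiagonal matrix with diagonal entries $\mathcal C_{11}=\mathcal C_{NN}=\frac1{s_1}$, $\mathcal C_{2m+1,2m+1}=\eta$, and $\mathcal C_{ii}=\alpha$ otherwise, and off-diagonal entries $\mathcal C_{i,i+1}=\mathcal C_{i+1,i}$ equal to $\beta_1$ for $i$ odd and $\beta_2$ for $i$ even when $1\le i\le 2m$, and equal to $\beta_2$ for $i$ odd and $\beta_1$ for $i$ even when $2m+1\le i\le 4m$. (It is the capacitance matrix of $4m+1$ resonators whose spacings alternate $s_1,s_2,\dots$ up to the centre resonator and are mirrored afterwards.) For reals $\alpha,\beta_1,\beta_2,a,b$: $A_{2k+1}^{(a,b)}(\alpha,\beta_1,\beta_2)\in\mathbb R^{(2k+1)\times(2k+1)}$ is the symmetric tridiagonal matrix with diagonal $(\alpha+a,\alpha,\dots,\alpha,\alpha+b)$ and $(i,i+1)$ off-diagonal entries $\beta_1$ for $i$ odd, $\beta_2$ for $i$ even ($1\le i\le 2k$); $A_{2k}^{(a,b)}(\alpha,\beta_1,\beta_2)\in\mathbb R^{2k\times 2k}$ is defined in the same way with size $2k$ (first and last off-diagonal entries $\beta_1$). With $U_k$ the Chebyshev polynomials of the second kind, $P_k^*(x):=(\beta_1\beta_2)^kU_k\!\Big(\frac{(x-\alpha)^2-\beta_1^2-\beta_2^2}{2\beta_1\beta_2}\Big)$.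 *)

theory Defs
  imports "Jordan_Normal_Form.Char_Poly"
begin

fun chebU :: "nat \<Rightarrow> real \<Rightarrow> real" where
  "chebU 0 t = 1"
| "chebU (Suc 0) t = 2 * t"
| "chebU (Suc (Suc k)) t = 2 * t * chebU (Suc k) t - chebU k t"

definition Pstar :: "real \<Rightarrow> real \<Rightarrow> real \<Rightarrow> nat \<Rightarrow> real \<Rightarrow> real" where
  "Pstar \<alpha> \<beta>1 \<beta>2 k x =
     (\<beta>1 * \<beta>2) ^ k * chebU k (((x - \<alpha>)^2 - \<beta>1^2 - \<beta>2^2) / (2 * \<beta>1 * \<beta>2))"

text \<open>A_n^{(a,b)}(alpha,beta1,beta2): n x n symmetric tridiagonal matrix, diagonal
  (alpha+a, alpha, ..., alpha, alpha+b); the (i,i+1) off-diagonal entry (1-based i)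
  is beta1 for i odd and beta2 for i even. Indices below are 0-based.\<close>
definition Amat :: "nat \<Rightarrow> real \<Rightarrow> real \<Rightarrow> real \<Rightarrow> real \<Rightarrow> real \<Rightarrow> real mat" where
  "Amat n a b \<alpha> \<beta>1 \<beta>2 = mat n n (\<lambda>(i, j).
     if i = j then \<alpha> + (if i = 0 then a else 0) + (if i = n - 1 then b else 0)
     else if i + 1 = j \<or> j + 1 = i then (if even (min i j) then \<beta>1 else \<beta>2)
     else 0)"

definition defect_cap :: "real \<Rightarrow> real \<Rightarrow> nat \<Rightarrow> real mat" where
  "defect_cap s1 s2 m = (let N = 4 * m + 1; \<alpha> = 1/s1 + 1/s2; \<beta>1 = - 1/s1; \<beta>2 = - 1/s2;
     \<eta> = 2/s2 in
     mat N N (\<lambda>(i, j).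
       if i = j then (if i = 0 \<or> i = N - 1 then 1/s1 else if i = 2 * m then \<eta> else \<alpha>)
       else if i + 1 = j \<or> j + 1 = i then
         (if min i j < 2 * m then (if even (min i j) then \<beta>1 else \<beta>2)
          else (if even (min i j) then \<beta>2 else \<beta>1))
       else 0))"

end

theory Submission
  imports Defs
begin

definition tri :: "nat \<Rightarrow> (nat \<Rightarrow> 'a::comm_ring_1) \<Rightarrow> (nat \<Rightarrow> 'a) \<Rightarrow> 'a mat" where
  "tri n d e = mat n n (\<lambda>(i,j). if i = j then d i else if i+1 = j then e i else if j+1 = i then e j else 0)"

fun tdet :: "(nat \<Rightarrow> 'a::comm_ring_1) \<Rightarrow> (nat \<Rightarrow> 'a) \<Rightarrow> nat \<Rightarrow> 'a" where
  "tdet d e 0 = 1"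
| "tdet d e (Suc 0) = d 0"
| "tdet d e (Suc (Suc n)) = d (Suc n) * tdet d e (Suc n) - e n * e n * tdet d e n"

lemma tri_carrier[simp]: "tri n d e \<in> carrier_mat n n" unfolding tri_def by auto

lemma det_tri: "det (tri n d e) = tdet d e n"
proof (induction d e n rule: tdet.induct)
  case (1 d e) then show ?case by (simp add: tri_def)
next
  case (2 d e)
  have "det (tri 1 d e) = (\<Sum>j<1. tri 1 d e $$ (0,j) * cofactor (tri 1 d e) 0 j)"
    by (rule laplace_expansion_row) auto
  also have "\<dots> = d 0" by (simp add: tri_def cofactor_def mat_delete_def)
  finally show ?case by simp
next
  case (3 d e n)
  let ?A = "tri (Suc (Suc n)) d e"
  have del1: "mat_delete ?A (Suc n) (Suc n) = tri (Suc n) d e"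
    by (rule eq_matI) (auto simp: tri_def mat_delete_def)
  define B where "B = mat_delete ?A (Suc n) n"
  have Bc: "B \<in> carrier_mat (Suc n) (Suc n)" unfolding B_def mat_delete_def tri_def by auto
  have delB: "mat_delete B n n = tri n d e"
    by (rule eq_matI) (auto simp: B_def tri_def mat_delete_def)
  have "det B = (\<Sum>i<Suc n. B $$ (i,n) * cofactor B i n)"
    by (rule laplace_expansion_column[OF Bc]) auto
  also have "\<dots> = (\<Sum>i\<in>{n}. B $$ (i,n) * cofactor B i n)"
    by (rule sum.mono_neutral_right) (auto simp: B_def tri_def mat_delete_def)
  also have "\<dots> = e n * tdet d e n"
  proof -
    have "B $$ (n,n) = e n" by (simp add: B_def tri_def mat_delete_def)
    moreover have "cofactor B n n = tdet d e n" using "3.IH"(2) delB by (simp add: cofactor_def)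
    ultimately show ?thesis by simp
  qed
  finally have detB: "det B = e n * tdet d e n" .
  have "det ?A = (\<Sum>j<Suc (Suc n). ?A $$ (Suc n,j) * cofactor ?A (Suc n) j)"
    by (rule laplace_expansion_row) auto
  also have "\<dots> = (\<Sum>j\<in>{n, Suc n}. ?A $$ (Suc n,j) * cofactor ?A (Suc n) j)"
    by (rule sum.mono_neutral_right) (auto simp: tri_def)
  also have "\<dots> = d (Suc n) * tdet d e (Suc n) - e n * e n * tdet d e n"
    using "3.IH"(1) detB del1 by (simp add: tri_def cofactor_def B_def)
  finally show ?case by simp
qed


lemma tdet_cong:
  assumes "\<And>i. i < n \<Longrightarrow> d i = d' i" "\<And>i. Suc i < n \<Longrightarrow> e i * e i = e' i * e' i"
  shows "tdet d e n = tdet d' e' n"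
  using assms
proof (induction d e n rule: tdet.induct)
  case (3 d e n)
  have a: "tdet d e (Suc n) = tdet d' e' (Suc n)" by (rule "3.IH"(1)) (use "3.prems" in auto)
  have b: "tdet d e n = tdet d' e' n" by (rule "3.IH"(2)) (use "3.prems" in auto)
  have c: "d (Suc n) = d' (Suc n)" using "3.prems"(1)[of "Suc n"] by simp
  have f: "e n * e n = e' n * e' n" using "3.prems"(2)[of n] by simp
  show ?case unfolding tdet.simps a b c f ..
qed auto

lemma tdet_split:
  "tdet d e (Suc p + Suc q) = tdet d e (Suc p) * tdet (\<lambda>i. d (i + Suc p)) (\<lambda>i. e (i + Suc p)) (Suc q)
     - e p * e p * tdet d e p * tdet (\<lambda>i. d (i + Suc (Suc p))) (\<lambda>i. e (i + Suc (Suc p))) q"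
proof -
  define T where "T = tdet d e"
  define S where "S = tdet (\<lambda>i. d (i + Suc p)) (\<lambda>i. e (i + Suc p))"
  define R where "R = tdet (\<lambda>i. d (i + Suc (Suc p))) (\<lambda>i. e (i + Suc (Suc p)))"
  define E where "E = e p * e p"
  have T2: "T (Suc (Suc k)) = d (Suc k) * T (Suc k) - e k * e k * T k" for k unfolding T_def by simp
  have S2: "S (Suc (Suc k)) = d (Suc k + Suc p) * S (Suc k) - e (k + Suc p) * e (k + Suc p) * S k" for k
    unfolding S_def by simp
  have R2: "R (Suc (Suc k)) = d (Suc (Suc k) + Suc p) * R (Suc k) - e (Suc k + Suc p) * e (Suc k + Suc p) * R k" for k
    unfolding R_def by simp
  let ?S = "\<lambda>q. T (Suc p + Suc q) = T (Suc p) * S (Suc q) - E * T p * R q"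
  have "?S q \<and> ?S (Suc q)"
  proof (induction q)
    case 0
    have a: "T (Suc p + Suc 0) = d (Suc p) * T (Suc p) - E * T p" using T2[of p] by (simp add: E_def)
    have b: "S (Suc 0) = d (Suc p)" "R 0 = 1" by (simp_all add: S_def R_def)
    have c: "T (Suc p + Suc (Suc 0)) = d (Suc (Suc p)) * T (Suc p + Suc 0) - e (Suc p) * e (Suc p) * T (Suc p)"
      using T2[of "Suc p"] by simp
    have d: "S (Suc (Suc 0)) = d (Suc (Suc p)) * d (Suc p) - e (Suc p) * e (Suc p)" by (simp add: S_def)
    have f: "R (Suc 0) = d (Suc (Suc p))" by (simp add: R_def)
    show ?case unfolding c a b d f by (simp add: algebra_simps)
  next
    case (Suc q)
    then have h1: "?S q" and h2: "?S (Suc q)" by auto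
    have c: "T (Suc p + Suc (Suc (Suc q))) = d (Suc (Suc q) + Suc p) * T (Suc p + Suc (Suc q)) - e (Suc q + Suc p) * e (Suc q + Suc p) * T (Suc p + Suc q)"
      using T2[of "Suc p + Suc q"] by (simp add: add.commute)
    have "?S (Suc (Suc q))"
      unfolding c h1 h2 S2[of "Suc q"] R2[of q] by (simp add: algebra_simps)
    with h2 show ?case by blast
  qed
  then show ?thesis unfolding T_def S_def R_def E_def by blast
qed

lemma tdet_front:
  "tdet d e (Suc (Suc n)) = d 0 * tdet (\<lambda>i. d (Suc i)) (\<lambda>i. e (Suc i)) (Suc n)
     - e 0 * e 0 * tdet (\<lambda>i. d (Suc (Suc i))) (\<lambda>i. e (Suc (Suc i))) n"
  using tdet_split[of d e 0 n] by simp

lemma tdet_rev: "tdet d e n = tdet (\<lambda>i. d (n - 1 - i)) (\<lambda>i. e (n - 2 - i)) n"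
proof (induction n arbitrary: d e rule: less_induct)
  case (less n)
  show ?case
  proof (cases n)
    case 0 then show ?thesis by simp
  next
    case (Suc k) note k = this
    show ?thesis
    proof (cases k)
      case 0 then show ?thesis using k by simp
    next
      case (Suc l)
      have n: "n = Suc (Suc l)" using k Suc by simp
      define d' where "d' = (\<lambda>i. d (n - 1 - i))"
      define e' where "e' = (\<lambda>i. e (n - 2 - i))"
      have i1: "tdet d e (Suc l) = tdet (\<lambda>i. d (Suc l - 1 - i)) (\<lambda>i. e (Suc l - 2 - i)) (Suc l)"
        using less[of "Suc l" d e] n by simp
      have i2: "tdet d e l = tdet (\<lambda>i. d (l - 1 - i)) (\<lambda>i. e (l - 2 - i)) l"
        using less[of l d e] n by simp
      have f1: "(\<lambda>i. d' (Suc i)) = (\<lambda>i. d (Suc l - 1 - i))" unfolding d'_def n by auto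
      have f2: "(\<lambda>i. e' (Suc i)) = (\<lambda>i. e (Suc l - 2 - i))" unfolding e'_def n by auto
      have f3: "(\<lambda>i. d' (Suc (Suc i))) = (\<lambda>i. d (l - 1 - i))" unfolding d'_def n by auto
      have f4: "(\<lambda>i. e' (Suc (Suc i))) = (\<lambda>i. e (l - 2 - i))" unfolding e'_def n by auto
      have "tdet d' e' n = d' 0 * tdet (\<lambda>i. d' (Suc i)) (\<lambda>i. e' (Suc i)) (Suc l)
         - e' 0 * e' 0 * tdet (\<lambda>i. d' (Suc (Suc i))) (\<lambda>i. e' (Suc (Suc i))) l"
        unfolding n by (rule tdet_front)
      also have "\<dots> = d (Suc l) * tdet d e (Suc l) - e l * e l * tdet d e l"
        unfolding f1 f2 f3 f4 i1 i2 by (simp add: d'_def e'_def n)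
      also have "\<dots> = tdet d e n" unfolding n by simp
      finally show ?thesis unfolding d'_def e'_def by simp
    qed
  qed
qed

lemma tdet_last:
  assumes "\<And>i. i < n \<Longrightarrow> d i = d' i" "d n = d' n + c"
  shows "tdet d e (Suc n) = tdet d' e (Suc n) + c * tdet d' e n"
proof (cases n)
  case 0 then show ?thesis using assms by simp
next
  case (Suc k)
  have a: "tdet d e (Suc k) = tdet d' e (Suc k)" by (rule tdet_cong) (use assms Suc in auto)
  have b: "tdet d e k = tdet d' e k" by (rule tdet_cong) (use assms Suc in auto)
  show ?thesis unfolding Suc tdet.simps a b using assms(2) Suc by (simp add: algebra_simps)
qed

lemma tdet_first:
  assumes "\<And>i. 0 < i \<Longrightarrow> i < Suc n \<Longrightarrow> d i = d' i" "d 0 = d' 0 + c"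
  shows "tdet d e (Suc n) = tdet d' e (Suc n) + c * tdet (\<lambda>i. d' (Suc i)) (\<lambda>i. e (Suc i)) n"
proof (cases n)
  case 0 then show ?thesis using assms by simp
next
  case (Suc k)
  have a: "tdet (\<lambda>i. d (Suc i)) (\<lambda>i. e (Suc i)) (Suc k) = tdet (\<lambda>i. d' (Suc i)) (\<lambda>i. e (Suc i)) (Suc k)"
    by (rule tdet_cong) (use assms Suc in auto)
  have b: "tdet (\<lambda>i. d (Suc (Suc i))) (\<lambda>i. e (Suc (Suc i))) k = tdet (\<lambda>i. d' (Suc (Suc i))) (\<lambda>i. e (Suc (Suc i))) k"
    by (rule tdet_cong) (use assms Suc in auto)
  show ?thesis unfolding Suc tdet_front a b using assms(2) by (simp add: algebra_simps)
qed

lemma tdet_poly: "poly (tdet d e n) x = tdet (\<lambda>i. poly (d i) x) (\<lambda>i. poly (e i) x) n"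
  by (induction d e n rule: tdet.induct) auto


lemma tdet_periodic:
  fixes z a b :: real and Q :: "nat \<Rightarrow> real"
  assumes Q0: "Q 0 = 1" and Q1: "Q 1 = z^2 - a^2 - b^2"
    and Q2: "\<And>k. Q (Suc (Suc k)) = (z^2 - a^2 - b^2) * Q (Suc k) - a^2 * b^2 * Q k"
  shows "tdet (\<lambda>_. z) (\<lambda>i. if even i then a else b) (Suc (2*k)) = z * Q k
       \<and> tdet (\<lambda>_. z) (\<lambda>i. if even i then a else b) (Suc (Suc (2*k))) = Q (Suc k) + b^2 * Q k"
proof (induction k)
  case 0
  show ?case using Q0 Q1 by (simp add: power2_eq_square)
next
  case (Suc k)
  let ?T = "tdet (\<lambda>_. z) (\<lambda>i. if even i then a else b)"
  have h1: "?T (Suc (2*k)) = z * Q k" and h2: "?T (Suc (Suc (2*k))) = Q (Suc k) + b^2 * Q k"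
    using Suc by auto
  have s: "Suc (2 * Suc k) = Suc (Suc (Suc (2*k)))" by simp
  have t3: "?T (Suc (Suc (Suc (2*k)))) = z * Q (Suc k)"
    unfolding tdet.simps(3)[of _ _ "Suc (2*k)"] h1 h2 by (simp add: algebra_simps power2_eq_square)
  have t4: "?T (Suc (Suc (Suc (Suc (2*k))))) = Q (Suc (Suc k)) + b^2 * Q (Suc k)"
    unfolding tdet.simps(3)[of _ _ "Suc (Suc (2*k))"] t3 h2 Q2 by (simp add: algebra_simps power2_eq_square)
  show ?case unfolding s using t3 t4 by simp
qed

lemma Pstar_0: "Pstar \<alpha> \<beta>1 \<beta>2 0 x = 1" by (simp add: Pstar_def)

lemma Pstar_1: assumes "\<beta>1 \<noteq> 0" "\<beta>2 \<noteq> 0"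
  shows "Pstar \<alpha> \<beta>1 \<beta>2 1 x = (x - \<alpha>)^2 - \<beta>1^2 - \<beta>2^2"
  using assms by (simp add: Pstar_def field_simps)

lemma Pstar_rec: assumes "\<beta>1 \<noteq> 0" "\<beta>2 \<noteq> 0"
  shows "Pstar \<alpha> \<beta>1 \<beta>2 (Suc (Suc k)) x = ((x - \<alpha>)^2 - \<beta>1^2 - \<beta>2^2) * Pstar \<alpha> \<beta>1 \<beta>2 (Suc k) x
     - \<beta>1^2 * \<beta>2^2 * Pstar \<alpha> \<beta>1 \<beta>2 k x"
proof -
  define t where "t = ((x - \<alpha>)^2 - \<beta>1^2 - \<beta>2^2) / (2 * \<beta>1 * \<beta>2)"
  have ht: "2 * t * (\<beta>1 * \<beta>2) = (x - \<alpha>)^2 - \<beta>1^2 - \<beta>2^2" using assms unfolding t_def by (simp add: field_simps)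
  have "Pstar \<alpha> \<beta>1 \<beta>2 (Suc (Suc k)) x = (\<beta>1 * \<beta>2) ^ Suc (Suc k) * (2 * t * chebU (Suc k) t - chebU k t)"
    unfolding Pstar_def t_def by simp
  also have "\<dots> = (2 * t * (\<beta>1 * \<beta>2)) * ((\<beta>1 * \<beta>2) ^ Suc k * chebU (Suc k) t) - (\<beta>1 * \<beta>2)^2 * ((\<beta>1 * \<beta>2) ^ k * chebU k t)"
    by (simp add: algebra_simps power2_eq_square)
  finally show ?thesis unfolding ht unfolding Pstar_def t_def[symmetric] by (simp add: power_mult_distrib)
qed

lemma cpm_Amat: "char_poly (Amat n a b \<alpha> \<beta>1 \<beta>2) = tdet (\<lambda>i. [:-(\<alpha> + (if i = 0 then a else 0) + (if i = n-1 then b else 0)), 1:])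
    (\<lambda>i. [:-(if even i then \<beta>1 else \<beta>2):]) n"
proof -
  have "char_poly_matrix (Amat n a b \<alpha> \<beta>1 \<beta>2) = tri n (\<lambda>i. [:-(\<alpha> + (if i = 0 then a else 0) + (if i = n-1 then b else 0)), 1:])
    (\<lambda>i. [:-(if even i then \<beta>1 else \<beta>2):])"
    by (rule eq_matI) (auto simp: char_poly_matrix_def Amat_def tri_def)
  then show ?thesis by (simp add: char_poly_def det_tri)
qed

lemma ev_Amat: "poly (char_poly (Amat n a b \<alpha> \<beta>1 \<beta>2)) x = tdet (\<lambda>i. x - \<alpha> - (if i = 0 then a else 0) - (if i = n-1 then b else 0))
    (\<lambda>i. if even i then -\<beta>1 else -\<beta>2) n"
  unfolding cpm_Amat tdet_poly by (rule tdet_cong) auto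


lemma even_sub: "(j::nat) \<le> n \<Longrightarrow> even (n - j) = (even n = even j)"
proof -
  assume "j \<le> n"
  then obtain d where "n = j + d" using le_Suc_ex by blast
  then show ?thesis by (auto simp: even_add)
qed

lemma cpm_C: "char_poly (defect_cap s1 s2 m) = tdet
   (\<lambda>i. [:-(if i = 0 \<or> i = 4*m then 1/s1 else if i = 2*m then 2/s2 else 1/s1+1/s2), 1:])
   (\<lambda>i. [:-(if i < 2*m then (if even i then -1/s1 else -1/s2) else (if even i then -1/s2 else -1/s1)):]) (4*m+1)"
proof -
  have "char_poly_matrix (defect_cap s1 s2 m) = tri (4*m+1)
   (\<lambda>i. [:-(if i = 0 \<or> i = 4*m then 1/s1 else if i = 2*m then 2/s2 else 1/s1+1/s2), 1:])
   (\<lambda>i. [:-(if i < 2*m then (if even i then -1/s1 else -1/s2) else (if even i then -1/s2 else -1/s1)):])"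
    by (rule eq_matI) (auto simp: char_poly_matrix_def defect_cap_def tri_def Let_def)
  then show ?thesis by (simp add: char_poly_def det_tri)
qed

theorem mainTheorem3:
  fixes s1 s2 :: real and m :: nat
  assumes "0 < s1" and "s1 < s2" and "2 \<le> m"
  defines "\<alpha> \<equiv> 1/s1 + 1/s2" and "\<beta>1 \<equiv> - 1/s1" and "\<beta>2 \<equiv> - 1/s2"
  shows "(\<forall>x::real. poly (char_poly (defect_cap s1 s2 m)) x =
            poly (char_poly (Amat (2*m) \<beta>2 0 \<alpha> \<beta>1 \<beta>2)) x *
            (((x - \<alpha> - \<beta>1) * Pstar \<alpha> \<beta>1 \<beta>2 m x
              + (\<beta>2 * (\<beta>1 - \<beta>2) * (x - \<alpha>) - \<beta>2 * \<beta>1^2 - (\<beta>1 - \<beta>2) * \<beta>2^2)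
                * Pstar \<alpha> \<beta>1 \<beta>2 (m - 1) x)
             - \<beta>2^2 * ((x - \<alpha> - \<beta>2) * Pstar \<alpha> \<beta>1 \<beta>2 (m - 1) x
                        - \<beta>2 * \<beta>1^2 * Pstar \<alpha> \<beta>1 \<beta>2 (m - 2) x)))
       \<and> char_poly (defect_cap s1 s2 m) =
            char_poly (Amat (2*m+1) \<beta>2 (\<beta>1 - \<beta>2) \<alpha> \<beta>1 \<beta>2) * char_poly (Amat (2*m) 0 \<beta>2 \<alpha> \<beta>1 \<beta>2)
            - [:\<beta>2^2:] * (char_poly (Amat (2*m) \<beta>2 0 \<alpha> \<beta>1 \<beta>2) * char_poly (Amat (2*m-1) 0 \<beta>2 \<alpha> \<beta>2 \<beta>1))
       \<and> char_poly (Amat (2*m) 0 \<beta>2 \<alpha> \<beta>1 \<beta>2) = char_poly (Amat (2*m) \<beta>2 0 \<alpha> \<beta>1 \<beta>2)"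
proof -
  have s1: "s1 \<noteq> 0" and s2: "s2 \<noteq> 0" using assms by auto
  have nz1: "\<beta>1 \<noteq> 0" and nz2: "\<beta>2 \<noteq> 0" using s1 s2 by (auto simp: \<beta>1_def \<beta>2_def)
  obtain k where mk: "m = Suc (Suc k)" using assms(3) by (metis add_2_eq_Suc le_Suc_ex)
  have c3: "char_poly (Amat (2*m) 0 \<beta>2 \<alpha> \<beta>1 \<beta>2) = char_poly (Amat (2*m) \<beta>2 0 \<alpha> \<beta>1 \<beta>2)"
    unfolding cpm_Amat
    apply (subst tdet_rev)
    apply (rule tdet_cong)
    using mk by (auto simp: even_sub)
  define dC where "dC = (\<lambda>i. [:-(if i = 0 \<or> i = 4*m then 1/s1 else if i = 2*m then 2/s2 else 1/s1+1/s2), 1:])"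
  define eC where "eC = (\<lambda>i. [:-(if i < 2*m then (if even i then -1/s1 else -1/s2) else (if even i then -1/s2 else -1/s1)):])"
  have n: "4*m+1 = Suc (2*m) + Suc (2*m-1)" using mk by simp
  have m21: "Suc (2*m-1) = 2*m" using mk by simp
  have ca: "tdet dC eC (Suc (2*m)) = char_poly (Amat (2*m+1) \<beta>2 (\<beta>1 - \<beta>2) \<alpha> \<beta>1 \<beta>2)"
    unfolding cpm_Amat Suc_eq_plus1 by (rule tdet_cong) (use mk in \<open>auto simp: dC_def eC_def \<alpha>_def \<beta>1_def \<beta>2_def\<close>)
  have cb: "tdet (\<lambda>i. dC (i + Suc (2*m))) (\<lambda>i. eC (i + Suc (2*m))) (Suc (2*m-1)) = char_poly (Amat (2*m) 0 \<beta>2 \<alpha> \<beta>1 \<beta>2)"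
    unfolding cpm_Amat m21 by (rule tdet_cong) (use mk in \<open>auto simp: dC_def eC_def \<alpha>_def \<beta>1_def \<beta>2_def\<close>)
  have cc: "tdet dC eC (2*m) = char_poly (Amat (2*m) \<beta>2 0 \<alpha> \<beta>1 \<beta>2)"
    unfolding cpm_Amat by (rule tdet_cong) (use mk in \<open>auto simp: dC_def eC_def \<alpha>_def \<beta>1_def \<beta>2_def\<close>)
  have cd: "tdet (\<lambda>i. dC (i + Suc (Suc (2*m)))) (\<lambda>i. eC (i + Suc (Suc (2*m)))) (2*m-1) = char_poly (Amat (2*m-1) 0 \<beta>2 \<alpha> \<beta>2 \<beta>1)"
    unfolding cpm_Amat by (rule tdet_cong) (use mk in \<open>auto simp: dC_def eC_def \<alpha>_def \<beta>1_def \<beta>2_def\<close>)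
  have ce: "eC (2*m) * eC (2*m) = [:\<beta>2^2:]" by (simp add: eC_def \<beta>2_def power2_eq_square)
  have c2: "char_poly (defect_cap s1 s2 m) =
            char_poly (Amat (2*m+1) \<beta>2 (\<beta>1 - \<beta>2) \<alpha> \<beta>1 \<beta>2) * char_poly (Amat (2*m) 0 \<beta>2 \<alpha> \<beta>1 \<beta>2)
            - [:\<beta>2^2:] * (char_poly (Amat (2*m) \<beta>2 0 \<alpha> \<beta>1 \<beta>2) * char_poly (Amat (2*m-1) 0 \<beta>2 \<alpha> \<beta>2 \<beta>1))"
    unfolding cpm_C dC_def[symmetric] eC_def[symmetric] n tdet_split ca cb cc cd ce
    by (simp add: algebra_simps)
  have c1: "poly (char_poly (defect_cap s1 s2 m)) x =
            poly (char_poly (Amat (2*m) \<beta>2 0 \<alpha> \<beta>1 \<beta>2)) x *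
            (((x - \<alpha> - \<beta>1) * Pstar \<alpha> \<beta>1 \<beta>2 m x
              + (\<beta>2 * (\<beta>1 - \<beta>2) * (x - \<alpha>) - \<beta>2 * \<beta>1^2 - (\<beta>1 - \<beta>2) * \<beta>2^2)
                * Pstar \<alpha> \<beta>1 \<beta>2 (m - 1) x)
             - \<beta>2^2 * ((x - \<alpha> - \<beta>2) * Pstar \<alpha> \<beta>1 \<beta>2 (m - 1) x
                        - \<beta>2 * \<beta>1^2 * Pstar \<alpha> \<beta>1 \<beta>2 (m - 2) x))" for x
  proof -
    define z where "z = x - \<alpha>"
    define P where "P = (\<lambda>k. Pstar \<alpha> \<beta>1 \<beta>2 k x)"
    define e where "e = (\<lambda>i::nat. if even i then -\<beta>1 else -\<beta>2)"
    define f where "f = (\<lambda>i::nat. if even i then -\<beta>2 else -\<beta>1)"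
    have ef: "(\<lambda>i. e (Suc i)) = f" by (auto simp: e_def f_def)
    define E where "E = tdet (\<lambda>_. z) e"
    define F where "F = tdet (\<lambda>_. z) f"
    have P0: "P 0 = 1" by (simp add: P_def Pstar_0)
    have P1: "P 1 = z^2 - (-\<beta>1)^2 - (-\<beta>2)^2" "P 1 = z^2 - (-\<beta>2)^2 - (-\<beta>1)^2"
    proof -
      have "P 1 = (x-\<alpha>)^2 - \<beta>1^2 - \<beta>2^2" unfolding P_def by (rule Pstar_1[OF nz1 nz2])
      then show "P 1 = z^2 - (-\<beta>1)^2 - (-\<beta>2)^2" "P 1 = z^2 - (-\<beta>2)^2 - (-\<beta>1)^2"
        by (simp_all add: z_def)
    qed
    have P2: "P (Suc (Suc k)) = (z^2 - (-\<beta>1)^2 - (-\<beta>2)^2) * P (Suc k) - (-\<beta>1)^2 * (-\<beta>2)^2 * P k"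
      "P (Suc (Suc k)) = (z^2 - (-\<beta>2)^2 - (-\<beta>1)^2) * P (Suc k) - (-\<beta>2)^2 * (-\<beta>1)^2 * P k" for k
      by (simp_all add: P_def Pstar_rec[OF nz1 nz2] z_def algebra_simps)
    note pe = tdet_periodic[of P z "-\<beta>1" "-\<beta>2", OF P0 P1(1) P2(1), folded e_def E_def]
    note pf = tdet_periodic[of P z "-\<beta>2" "-\<beta>1", OF P0 P1(2) P2(2), folded f_def F_def]
    have E1: "E (Suc (2*m)) = z * P m" using pe[of m] by simp
    have E2: "E (2*m) = P m + \<beta>2^2 * P (m-1)" using pe[of "Suc k"] mk by simp
    have F2: "F (2*m) = P m + \<beta>1^2 * P (m-1)" using pf[of "Suc k"] mk by simp
    have F1: "F (2*m-1) = z * P (m-1)" using pf[of "Suc k"] mk by simp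
    have F0: "F (2*m-2) = P (m-1) + \<beta>1^2 * P (m-2)" using pf[of k] mk by simp
    define d1 where "d1 = (\<lambda>i::nat. z - (if i = 0 then \<beta>2 else 0))"
    have X1: "poly (char_poly (Amat (2*m+1) \<beta>2 (\<beta>1 - \<beta>2) \<alpha> \<beta>1 \<beta>2)) x
       = tdet d1 e (Suc (2*m)) + (-(\<beta>1 - \<beta>2)) * tdet d1 e (2*m)"
      unfolding ev_Amat e_def[symmetric] Suc_eq_plus1[symmetric] by (rule tdet_last) (use mk in \<open>auto simp: d1_def z_def\<close>)
    have X2: "tdet d1 e (Suc (2*m)) = E (Suc (2*m)) + (-\<beta>2) * F (2*m)"
      unfolding E_def F_def ef[symmetric] by (rule tdet_first) (auto simp: d1_def)
    have X3: "tdet d1 e (2*m) = E (2*m) + (-\<beta>2) * F (2*m-1)"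
    proof -
      have "tdet d1 e (Suc (2*m-1)) = E (Suc (2*m-1)) + (-\<beta>2) * F (2*m-1)"
        unfolding E_def F_def ef[symmetric] by (rule tdet_first) (auto simp: d1_def)
      moreover have "Suc (2*m-1) = 2*m" using mk by simp
      ultimately show ?thesis by simp
    qed
    have Y1: "poly (char_poly (Amat (2*m-1) 0 \<beta>2 \<alpha> \<beta>2 \<beta>1)) x = F (2*m-1) + (-\<beta>2) * F (2*m-2)"
    proof -
      have "poly (char_poly (Amat (Suc (2*m-2)) 0 \<beta>2 \<alpha> \<beta>2 \<beta>1)) x = F (Suc (2*m-2)) + (-\<beta>2) * F (2*m-2)"
        unfolding ev_Amat F_def f_def by (rule tdet_last) (auto simp: z_def)
      moreover have "Suc (2*m-2) = 2*m-1" using mk by simp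
      ultimately show ?thesis by simp
    qed
    have pA: "poly (char_poly (Amat (2*m) 0 \<beta>2 \<alpha> \<beta>1 \<beta>2)) x = poly (char_poly (Amat (2*m) \<beta>2 0 \<alpha> \<beta>1 \<beta>2)) x"
      using c3 by simp
    have "poly (char_poly (defect_cap s1 s2 m)) x =
       poly (char_poly (Amat (2*m) \<beta>2 0 \<alpha> \<beta>1 \<beta>2)) x *
        (poly (char_poly (Amat (2*m+1) \<beta>2 (\<beta>1 - \<beta>2) \<alpha> \<beta>1 \<beta>2)) x
         - \<beta>2^2 * poly (char_poly (Amat (2*m-1) 0 \<beta>2 \<alpha> \<beta>2 \<beta>1)) x)"
      unfolding c2 poly_diff poly_mult pA by (simp add: algebra_simps)
    also have "poly (char_poly (Amat (2*m+1) \<beta>2 (\<beta>1 - \<beta>2) \<alpha> \<beta>1 \<beta>2)) x =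
       (z - \<beta>1) * P m + (\<beta>2 * (\<beta>1 - \<beta>2) * z - \<beta>2 * \<beta>1^2 - (\<beta>1 - \<beta>2) * \<beta>2^2) * P (m - 1)"
      unfolding X1 X2 X3 E1 E2 F2 F1 by (simp add: algebra_simps power2_eq_square)
    also have "poly (char_poly (Amat (2*m-1) 0 \<beta>2 \<alpha> \<beta>2 \<beta>1)) x =
       (z - \<beta>2) * P (m - 1) - \<beta>2 * \<beta>1^2 * P (m - 2)"
      unfolding Y1 F1 F0 by (simp add: algebra_simps power2_eq_square)
    finally show ?thesis unfolding z_def P_def by (simp add: algebra_simps)
  qed
  show ?thesis using c1 c2 c3 by blast
qed

end
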